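(* Let $G$ be an undirected graph on vertex set $[m]$ with symmetric adjacency matrix $\mathcal{A}\in\{0,1\}^{m\times m}$, each vertex $i$ carrying an attribute vector $a_i\in\mathcal{U}=[k_1]\times\cdots\times[k_C]$. Let $W\in\mathbb{R}^{r\times K}$ with $K=\sum_{j=1}^C k_j$, $W_v\in\mathbb{R}^{r'\times r}$, $W_g\in\mathbb{R}^{r'\times r'}$, let $\sigma(z)=\max\{\alpha z,z\}$ (applied entrywise) for some fixed $\alpha\in[0,1]$, and let $S:\mathbb{R}^r\times\mathbb{R}^r\to\mathbb{R}$ be any function. Set $f_i=W(a_i)$, $F=[f_1,\dots,f_m]\in\mathbb{R}^{r\times m}$, $\mathbf{S}_{ji}=S(f_j,f_i)$, $F_{(1)}=\sigma(W_vF)$, and for $n\ge2$, $F_{(n)}=\big(F_{(n-1)}(\mathcal{A}\odot\mathbf{S})\big)\odot F_{(1)}$; let $f_{(n)}=\sigma(W_gF_{(n)})\mathbf{1}$ with $\mathbf{1}\in\mathbb{R}^m$ the all-ones vector. Then for every $n\ge1$ and every vertex $i\in[m]$, the vector $\tilde F^i_{(n)}:=W_g[F_{(n)}]_i$ (where $[\cdot]_i$ denotes the $i$-th column) satisfies $$\tilde F^i_{(n)}=W_g\,(W_vW)^{\{n\}}\,\Lambda_{(n)}\,c^i_{(n)}(G).$$ Consequently, for every $T\ge1$, $$f_{[T]}=\sum_{i=1}^m\sigma\big(\mathcal{M}\Lambda c^i_{[T]}(G)\big),$$ where $f_{[T]}=[f_{(1)};\dots;f_{(T)}]$, $c^i_{[T]}=[c^i_{(1)};\dots;c^i_{(T)}]$,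 $\mathcal{M}$ is block-diagonal with diagonal blocks $W_g(W_vW)^{\{1\}},\dots,W_g(W_vW)^{\{T\}}$, and $\Lambda$ is block-diagonal with blocks $\Lambda_{(1)},\dots,\Lambda_{(T)}$.
   Context: For an attribute vector $u=(u^1,\dots,u^C)\in\mathcal{U}$, let $h(u)\in\{0,1\}^K$ be the concatenation of the one-hot encodings of $u^1\in[k_1],\dots,u^C\in[k_C]$, and $W(u)=Wh(u)$. Let $K_C=\prod_{j=1}^Ck_j=|\mathcal{U}|$. A walk of length $n$ is a sequence of vertices $(p_1,\dots,p_n)$ with $\mathcal{A}_{p_k,p_{k+1}}=1$ for all $k<n$; it starts at $p_1$; its walk type is $(a_{p_1},\dots,a_{p_n})\in\mathcal{U}^n$. The vertex walk statistics $c^i_{(n)}(G)\in\mathbb{R}^{K_C^n}$ has entries indexed by walk types $v\in\mathcal{U}^n$, the entry at $v$ being the number of walks of length $n$ starting at vertex $i$ with type $v$. The walk weight of $v=(v_1,\dots,v_n)$ is $\lambda(v)=\prod_{k=1}^{n-1}S\big(W(v_{k+1}),W(v_k)\big)$ (equal to $1$ if $n=1$), and $\Lambda_{(n)}$ is the $K_C^n\times K_C^n$ diagonal matrix with entry $\lambda(v)$ at index $v$. For $z\in\mathbb{R}^{r'}$, $\Gamma(z)$ is the diagonal matrix with $[\Gamma(z)]_{ii}=\alpha\,\mathbb{I}[z_i<0]+\mathbb{I}[z_i\ge0]$. $(W_vW)^{\{n\}}$ is the $r'\times K_C^n$ matrix whose column indexed by $v=(v_1,\dots,v_n)$ is $g(v_1)\odot\cdots\odot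 g(v_n)$ with $g(u)=\Gamma(W_vW(u))\,W_vW(u)$. $\odot$ is the entrywise product; index orderings of $c^i_{(n)}$, $\Lambda_{(n)}$ and columns of $(W_vW)^{\{n\}}$ agree. *)

theory Defs
  imports Complex_Main
begin

(* Conventions: vertices are 0..<m; [k_j] is rendered 0-based as {0..<k_j};
   vectors and matrices are functions on nat indices, only entries inside the
   stated dimensions matter. Attribute vectors are lists of length C = length k. *)

definition leaky :: "real \<Rightarrow> real \<Rightarrow> real" where
  "leaky \<alpha> z = max (\<alpha> * z) z"

definition attrs :: "nat list \<Rightarrow> nat list set" where
  "attrs k = {u. length u = length k \<and> (\<forall>j<length k. u ! j < k ! j)}"

definition offs :: "nat list \<Rightarrow> nat \<Rightarrow> nat" where
  "offs k j = sum_list (take j k)"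

text \<open>h(u): concatenation of one-hot encodings, a vector of length K = sum_list k.\<close>
definition onehot :: "nat list \<Rightarrow> nat list \<Rightarrow> nat \<Rightarrow> real" where
  "onehot k u t = (if \<exists>j<length k. t = offs k j + u ! j then 1 else 0)"

definition Wemb :: "nat \<Rightarrow> nat list \<Rightarrow> (nat \<Rightarrow> nat \<Rightarrow> real) \<Rightarrow> nat list \<Rightarrow> nat \<Rightarrow> real" where
  "Wemb r k W u = (\<lambda>s. if s < r then (\<Sum>t<sum_list k. W s t * onehot k u t) else 0)"

definition walk_types :: "nat list \<Rightarrow> nat \<Rightarrow> nat list list set" where
  "walk_types k n = {vs. length vs = n \<and> set vs \<subseteq> attrs k}"

definition is_walk :: "(nat \<Rightarrow> nat \<Rightarrow> real) \<Rightarrow> nat list \<Rightarrow> bool" where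
  "is_walk A ps = (\<forall>t. Suc t < length ps \<longrightarrow> A (ps ! t) (ps ! Suc t) = 1)"

text \<open>Entry of c^i_(n)(G) at walk type v (n = length v).\<close>
definition walk_count :: "nat \<Rightarrow> (nat \<Rightarrow> nat \<Rightarrow> real) \<Rightarrow> (nat \<Rightarrow> nat list) \<Rightarrow> nat \<Rightarrow> nat list list \<Rightarrow> nat" where
  "walk_count m A a i v = card {ps. length ps = length v \<and> ps \<noteq> [] \<and> hd ps = i \<and>
        set ps \<subseteq> {..<m} \<and> is_walk A ps \<and> map a ps = v}"

definition walk_weight :: "((nat \<Rightarrow> real) \<Rightarrow> (nat \<Rightarrow> real) \<Rightarrow> real) \<Rightarrow> (nat list \<Rightarrow> nat \<Rightarrow> real)
      \<Rightarrow> nat list list \<Rightarrow> real" where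
  "walk_weight S Wu v = (\<Prod>t<length v - 1. S (Wu (v ! Suc t)) (Wu (v ! t)))"

definition Gam :: "real \<Rightarrow> real \<Rightarrow> real" where
  "Gam \<alpha> z = \<alpha> * (if z < 0 then 1 else 0) + (if z \<ge> 0 then 1 else 0)"

definition WvWu :: "nat \<Rightarrow> nat list \<Rightarrow> (nat \<Rightarrow> nat \<Rightarrow> real) \<Rightarrow> (nat \<Rightarrow> nat \<Rightarrow> real) \<Rightarrow> nat list \<Rightarrow> nat \<Rightarrow> real" where
  "WvWu r k W Wv u = (\<lambda>q. \<Sum>s<r. Wv q s * Wemb r k W u s)"

definition gvec :: "real \<Rightarrow> nat \<Rightarrow> nat list \<Rightarrow> (nat \<Rightarrow> nat \<Rightarrow> real) \<Rightarrow> (nat \<Rightarrow> nat \<Rightarrow> real) \<Rightarrow> nat list \<Rightarrow> nat \<Rightarrow> real" where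
  "gvec \<alpha> r k W Wv u = (\<lambda>q. Gam \<alpha> (WvWu r k W Wv u q) * WvWu r k W Wv u q)"

text \<open>Entry (q, v) of (W_v W)^{n}: column v is g(v_1) \<odot> ... \<odot> g(v_n).\<close>
definition WvW_pow :: "real \<Rightarrow> nat \<Rightarrow> nat list \<Rightarrow> (nat \<Rightarrow> nat \<Rightarrow> real) \<Rightarrow> (nat \<Rightarrow> nat \<Rightarrow> real)
      \<Rightarrow> nat list list \<Rightarrow> nat \<Rightarrow> real" where
  "WvW_pow \<alpha> r k W Wv v q = (\<Prod>t<length v. gvec \<alpha> r k W Wv (v ! t) q)"

fun featmat :: "nat \<Rightarrow> (nat \<Rightarrow> nat \<Rightarrow> real) \<Rightarrow> (nat \<Rightarrow> nat \<Rightarrow> real) \<Rightarrow> nat \<Rightarrow> nat \<Rightarrow> nat \<Rightarrow> real" where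
  "featmat m F1 B 0 = (\<lambda>q i. 0)"
| "featmat m F1 B (Suc 0) = F1"
| "featmat m F1 B (Suc (Suc n)) =
     (\<lambda>q i. (\<Sum>j<m. featmat m F1 B (Suc n) q j * B j i) * F1 q i)"

definition mv :: "'c set \<Rightarrow> ('r \<Rightarrow> 'c \<Rightarrow> real) \<Rightarrow> ('c \<Rightarrow> real) \<Rightarrow> 'r \<Rightarrow> real" where
  "mv I M x = (\<lambda>rr. \<Sum>c\<in>I. M rr c * x c)"

text \<open>Stacked row indices (n,p), n = 1..T, p < r'; stacked column indices (n,v), v \<in> U^n.\<close>
definition rowIdx :: "nat \<Rightarrow> nat \<Rightarrow> (nat \<times> nat) set" where
  "rowIdx r' T = {(n, p). 1 \<le> n \<and> n \<le> T \<and> p < r'}"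

definition colIdx :: "nat list \<Rightarrow> nat \<Rightarrow> (nat \<times> nat list list) set" where
  "colIdx k T = {(n, v). 1 \<le> n \<and> n \<le> T \<and> v \<in> walk_types k n}"

definition F1mat :: "real \<Rightarrow> nat \<Rightarrow> nat list \<Rightarrow> (nat \<Rightarrow> nat \<Rightarrow> real) \<Rightarrow> (nat \<Rightarrow> nat \<Rightarrow> real)
      \<Rightarrow> (nat \<Rightarrow> nat list) \<Rightarrow> nat \<Rightarrow> nat \<Rightarrow> real" where
  "F1mat \<alpha> r k W Wv a = (\<lambda>q i. leaky \<alpha> (\<Sum>s<r. Wv q s * Wemb r k W (a i) s))"

definition Fmat :: "nat \<Rightarrow> real \<Rightarrow> nat \<Rightarrow> nat list \<Rightarrow> (nat \<Rightarrow> nat \<Rightarrow> real) \<Rightarrow> (nat \<Rightarrow> nat \<Rightarrow> real)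
      \<Rightarrow> (nat \<Rightarrow> nat list) \<Rightarrow> (nat \<Rightarrow> nat \<Rightarrow> real) \<Rightarrow> ((nat \<Rightarrow> real) \<Rightarrow> (nat \<Rightarrow> real) \<Rightarrow> real)
      \<Rightarrow> nat \<Rightarrow> nat \<Rightarrow> nat \<Rightarrow> real" where
  "Fmat m \<alpha> r k W Wv a A S = featmat m (F1mat \<alpha> r k W Wv a)
      (\<lambda>j i. A j i * S (Wemb r k W (a j)) (Wemb r k W (a i)))"

definition Mblk :: "real \<Rightarrow> nat \<Rightarrow> nat \<Rightarrow> nat list \<Rightarrow> (nat \<Rightarrow> nat \<Rightarrow> real) \<Rightarrow> (nat \<Rightarrow> nat \<Rightarrow> real)
      \<Rightarrow> (nat \<Rightarrow> nat \<Rightarrow> real) \<Rightarrow> nat \<times> nat \<Rightarrow> nat \<times> nat list list \<Rightarrow> real" where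
  "Mblk \<alpha> r r' k W Wv Wg x y = (if fst x = fst y
      then (\<Sum>q<r'. Wg (snd x) q * WvW_pow \<alpha> r k W Wv (snd y) q) else 0)"

definition Lblk :: "(nat \<times> nat list list \<Rightarrow> real) \<Rightarrow> nat \<times> nat list list \<Rightarrow> nat \<times> nat list list \<Rightarrow> real" where
  "Lblk lam x y = (if x = y then lam x else 0)"

end

theory Submission
  imports Defs
begin

definition Ln :: "nat \<Rightarrow> nat \<Rightarrow> nat list set" where
  "Ln m n = {ps. set ps \<subseteq> {..<m} \<and> length ps = n}"

lemma Ln_fin: "finite (Ln m n)"
  unfolding Ln_def by (rule finite_lists_length_eq) simp

lemma Ln_Suc: "Ln m (Suc n) = (\<lambda>(j,ps). j # ps) ` ({..<m} \<times> Ln m n)"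
proof -
  have "ps \<in> (\<lambda>(j,ps). j # ps) ` ({..<m} \<times> Ln m n)" if "ps \<in> Ln m (Suc n)" for ps
    using that unfolding Ln_def by (cases ps) force+
  then show ?thesis unfolding Ln_def by auto
qed

lemma sum_Ln_Suc: "(\<Sum>ps\<in>Ln m (Suc n). f ps) = (\<Sum>j<m. \<Sum>ps\<in>Ln m n. f (j # ps))"
proof -
  have inj: "inj_on (\<lambda>(j,ps). j # ps) ({..<m} \<times> Ln m n)" by (auto simp: inj_on_def)
  have "(\<Sum>ps\<in>Ln m (Suc n). f ps) = (\<Sum>x\<in>{..<m} \<times> Ln m n. f ((\<lambda>(j,ps). j # ps) x))"
    unfolding Ln_Suc by (rule sum.reindex[OF inj, unfolded comp_def])
  also have "\<dots> = (\<Sum>j<m. \<Sum>ps\<in>Ln m n. f (j # ps))"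
    by (simp add: sum.cartesian_product case_prod_unfold)
  finally show ?thesis .
qed

definition Gp :: "(nat \<Rightarrow> real) \<Rightarrow> nat list \<Rightarrow> real" where
  "Gp g ps = (\<Prod>t<length ps. g (ps ! t))"

definition Ep :: "(nat \<Rightarrow> nat \<Rightarrow> real) \<Rightarrow> nat list \<Rightarrow> real" where
  "Ep B ps = (\<Prod>t<length ps - 1. B (ps ! Suc t) (ps ! t))"

lemma Gp_Cons: "Gp g (i # ps) = g i * Gp g ps"
  unfolding Gp_def by (simp add: prod.lessThan_Suc_shift del: prod.lessThan_Suc)

lemma Ep_Cons2: "Ep B (i # j # ps) = B j i * Ep B (j # ps)"
  unfolding Ep_def by (simp add: prod.lessThan_Suc_shift del: prod.lessThan_Suc)

lemma featmat_walks:
  "i < m \<Longrightarrow> featmat m F1 B (Suc n) q i = (\<Sum>ps\<in>Ln m n. Gp (\<lambda>j. F1 q j) (i # ps) * Ep B (i # ps))"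
proof (induction n arbitrary: i)
  case 0
  have "Ln m 0 = {[]}" by (auto simp: Ln_def)
  then show ?case by (simp add: Gp_def Ep_def)
next
  case (Suc n)
  have "featmat m F1 B (Suc (Suc n)) q i = (\<Sum>j<m. featmat m F1 B (Suc n) q j * B j i) * F1 q i"
    by simp
  also have "\<dots> = (\<Sum>j<m. \<Sum>ps\<in>Ln m n. Gp (\<lambda>j. F1 q j) (i # j # ps) * Ep B (i # j # ps))"
    unfolding sum_distrib_right
  proof (rule sum.cong[OF refl])
    fix j assume "j \<in> {..<m}"
    then show "featmat m F1 B (Suc n) q j * B j i * F1 q i =
      (\<Sum>ps\<in>Ln m n. Gp (F1 q) (i # j # ps) * Ep B (i # j # ps))"
      by (simp add: Suc.IH sum_distrib_right sum_distrib_left Gp_Cons Ep_Cons2 mult_ac)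
  qed
  also have "\<dots> = (\<Sum>ps\<in>Ln m (Suc n). Gp (\<lambda>j. F1 q j) (i # ps) * Ep B (i # ps))"
    by (rule sum_Ln_Suc[symmetric])
  finally show ?case .
qed
lemma leaky_Gam: "\<alpha> \<le> 1 \<Longrightarrow> leaky \<alpha> z = Gam \<alpha> z * z"
proof (cases "z < 0")
  case True
  assume a: "\<alpha> \<le> 1"
  have "1 * z \<le> \<alpha> * z" using True a by (intro mult_right_mono_neg) auto
  then show ?thesis using True unfolding leaky_def Gam_def by (simp add: max_def)
next
  case False
  assume a: "\<alpha> \<le> 1"
  have "\<alpha> * z \<le> 1 * z" using False a by (intro mult_right_mono) auto
  then show ?thesis using False unfolding leaky_def Gam_def by (simp add: max_def)
qed

lemma prodA_walk:
  assumes A01: "\<forall>i<m. \<forall>j<m. A i j = 0 \<or> A i j = 1" and sL: "set L \<subseteq> {..<m}"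
  shows "(\<Prod>t<length L - 1. A (L ! t) (L ! Suc t)) = (if is_walk A L then 1 else 0)"
proof (cases "is_walk A L")
  case True
  then show ?thesis unfolding is_walk_def by (auto intro!: prod.neutral)
next
  case False
  then obtain t where t: "Suc t < length L" "A (L ! t) (L ! Suc t) \<noteq> 1" unfolding is_walk_def by auto
  have "L ! t \<in> set L" "L ! Suc t \<in> set L" using t(1) by (auto intro!: nth_mem)
  then have "L ! t < m" "L ! Suc t < m" using sL by blast+
  with A01 t have "A (L ! t) (L ! Suc t) = 0" by blast
  moreover have "t \<in> {..<length L - 1}" using t by auto
  ultimately show ?thesis using False by (auto intro: prod_zero)
qed

lemma attrs_fin: "finite (attrs k)"
proof -
  have "attrs k \<subseteq> {u. set u \<subseteq> {..<sum_list k} \<and> length u = length k}"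
  proof
    fix u assume u: "u \<in> attrs k"
    have "set u \<subseteq> {..<sum_list k}"
    proof
      fix x assume "x \<in> set u"
      then obtain j where j: "j < length u" "x = u ! j" by (auto simp: in_set_conv_nth)
      then have "j < length k" using u by (simp add: attrs_def)
      then have "u ! j < k ! j" "k ! j \<le> sum_list k" using u by (auto simp: attrs_def elem_le_sum_list)
      then show "x \<in> {..<sum_list k}" using j by simp
    qed
    then show "u \<in> {u. set u \<subseteq> {..<sum_list k} \<and> length u = length k}" using u by (simp add: attrs_def)
  qed
  then show ?thesis by (rule finite_subset) (rule finite_lists_length_eq, simp)
qed

lemma walk_types_fin: "finite (walk_types k n)"
  unfolding walk_types_def by (rule finite_subset[OF _ finite_lists_length_eq[OF attrs_fin, of k n]]) auto

lemma walk_form: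
  fixes A :: "nat \<Rightarrow> nat \<Rightarrow> real"
  assumes A01: "\<forall>i<m. \<forall>j<m. A i j = 0 \<or> A i j = 1"
    and Asym: "\<forall>i<m. \<forall>j<m. A i j = A j i"
    and attr: "\<forall>i<m. a i \<in> attrs k"
    and al: "\<alpha> \<le> 1" and im: "i < m"
  shows "(\<Sum>ps\<in>Ln m n. Gp (F1mat \<alpha> r k W Wv a q) (i # ps)
           * Ep (\<lambda>j i. A j i * S (Wemb r k W (a j)) (Wemb r k W (a i))) (i # ps))
   = (\<Sum>v\<in>walk_types k (Suc n). WvW_pow \<alpha> r k W Wv v q * walk_weight S (Wemb r k W) v
          * real (walk_count m A a i v))"
proof -
  define h where "h v = WvW_pow \<alpha> r k W Wv v q * walk_weight S (Wemb r k W) v" for v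
  define X where "X = {ps \<in> Ln m n. is_walk A (i # ps)}"
  define g where "g ps = map a (i # ps)" for ps
  have F1g: "F1mat \<alpha> r k W Wv a q j = gvec \<alpha> r k W Wv (a j) q" for j
    unfolding F1mat_def gvec_def WvWu_def using leaky_Gam[OF al] by simp
  have trm: "Gp (F1mat \<alpha> r k W Wv a q) (i # ps)
           * Ep (\<lambda>j i. A j i * S (Wemb r k W (a j)) (Wemb r k W (a i))) (i # ps)
        = (if is_walk A (i # ps) then h (g ps) else 0)" if ps: "ps \<in> Ln m n" for ps
  proof -
    let ?L = "i # ps"
    have sL: "set ?L \<subseteq> {..<m}" using ps im by (auto simp: Ln_def)
    have G: "Gp (F1mat \<alpha> r k W Wv a q) ?L = WvW_pow \<alpha> r k W Wv (g ps) q"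
      unfolding Gp_def WvW_pow_def g_def F1g
      by (rule prod.cong) (simp_all del: list.map)
    have E: "Ep (\<lambda>j i. A j i * S (Wemb r k W (a j)) (Wemb r k W (a i))) ?L
       = (\<Prod>t<length ?L - 1. A (?L ! t) (?L ! Suc t)) * walk_weight S (Wemb r k W) (g ps)"
    proof -
      have "Ep (\<lambda>j i. A j i * S (Wemb r k W (a j)) (Wemb r k W (a i))) ?L
         = (\<Prod>t<length ?L - 1. A (?L ! t) (?L ! Suc t) * S (Wemb r k W (g ps ! Suc t)) (Wemb r k W (g ps ! t)))"
        unfolding Ep_def
      proof (rule prod.cong[OF refl])
        fix t assume t: "t \<in> {..<length ?L - 1}"
        then have t1: "t < length ?L" "Suc t < length ?L" by auto
        have "?L ! t \<in> set ?L" "?L ! Suc t \<in> set ?L" using nth_mem[OF t1(1)] nth_mem[OF t1(2)] .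
        then have "?L ! t < m" "?L ! Suc t < m" using sL by blast+
        then have "A (?L ! Suc t) (?L ! t) = A (?L ! t) (?L ! Suc t)" using Asym by blast
        moreover have "g ps ! Suc t = a (?L ! Suc t)" "g ps ! t = a (?L ! t)"
          using t1 unfolding g_def by (simp_all del: list.map)
        ultimately show "A (?L ! Suc t) (?L ! t) * S (Wemb r k W (a (?L ! Suc t))) (Wemb r k W (a (?L ! t)))
            = A (?L ! t) (?L ! Suc t) * S (Wemb r k W (g ps ! Suc t)) (Wemb r k W (g ps ! t))" by simp
      qed
      also have "\<dots> = (\<Prod>t<length ?L - 1. A (?L ! t) (?L ! Suc t)) * walk_weight S (Wemb r k W) (g ps)"
        unfolding walk_weight_def prod.distrib by (simp add: g_def del: list.map)
      finally show ?thesis .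
    qed
    show ?thesis unfolding G E prodA_walk[OF A01 sL] h_def by simp
  qed
  have "(\<Sum>ps\<in>Ln m n. Gp (F1mat \<alpha> r k W Wv a q) (i # ps)
           * Ep (\<lambda>j i. A j i * S (Wemb r k W (a j)) (Wemb r k W (a i))) (i # ps))
      = (\<Sum>ps\<in>Ln m n. if is_walk A (i # ps) then h (g ps) else 0)"
    by (rule sum.cong[OF refl]) (rule trm)
  also have "\<dots> = (\<Sum>ps\<in>X. h (g ps))"
    unfolding X_def by (simp add: sum.inter_filter[OF Ln_fin, symmetric])
  also have "\<dots> = (\<Sum>v\<in>walk_types k (Suc n). \<Sum>ps\<in>{ps \<in> X. g ps = v}. h (g ps))"
  proof (rule sum.group[symmetric])
    show "finite X" unfolding X_def using Ln_fin by simp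
    show "finite (walk_types k (Suc n))" by (rule walk_types_fin)
    show "g ` X \<subseteq> walk_types k (Suc n)"
      using attr im unfolding X_def g_def walk_types_def Ln_def by (auto simp: subset_eq)
  qed
  also have "\<dots> = (\<Sum>v\<in>walk_types k (Suc n). h v * real (walk_count m A a i v))"
  proof (rule sum.cong[OF refl])
    fix v assume v: "v \<in> walk_types k (Suc n)"
    have "{ps. length ps = length v \<and> ps \<noteq> [] \<and> hd ps = i \<and>
        set ps \<subseteq> {..<m} \<and> is_walk A ps \<and> map a ps = v} = Cons i ` {ps \<in> X. g ps = v}"
    proof (rule set_eqI, rule iffI)
      fix ps assume "ps \<in> {ps. length ps = length v \<and> ps \<noteq> [] \<and> hd ps = i \<and>
        set ps \<subseteq> {..<m} \<and> is_walk A ps \<and> map a ps = v}"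
      then show "ps \<in> Cons i ` {ps \<in> X. g ps = v}" using v
      proof (cases ps)
        case Nil then show ?thesis using \<open>ps \<in> _\<close> by simp
      next
        case (Cons x xs)
        have h: "length ps = length v" "hd ps = i" "set ps \<subseteq> {..<m}" "is_walk A ps" "map a ps = v"
          using \<open>ps \<in> _\<close> by auto
        have lv: "length v = Suc n" using v unfolding walk_types_def by simp
        have "x = i" using h Cons by simp
        then have "xs \<in> X" "g xs = v" using h lv Cons unfolding X_def g_def Ln_def by auto
        then show ?thesis using Cons \<open>x = i\<close> by blast
      qed
    next
      fix ps assume "ps \<in> Cons i ` {ps \<in> X. g ps = v}"
      then show "ps \<in> {ps. length ps = length v \<and> ps \<noteq> [] \<and> hd ps = i \<and>
        set ps \<subseteq> {..<m} \<and> is_walk A ps \<and> map a ps = v}" using v im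
      proof -
        obtain xs where xs: "ps = i # xs" "xs \<in> X" "g xs = v" using \<open>ps \<in> _\<close> by blast
        have lv: "length v = Suc n" using v unfolding walk_types_def by simp
        have "length xs = n" "set xs \<subseteq> {..<m}" "is_walk A (i # xs)" using xs(2) unfolding X_def Ln_def by auto
        moreover have "map a ps = v" using xs unfolding g_def by simp
        ultimately show ?thesis using xs(1) lv im by auto
      qed
    qed
    then have "walk_count m A a i v = card {ps \<in> X. g ps = v}"
      unfolding walk_count_def by (simp add: card_image)
    then show "(\<Sum>ps\<in>{ps \<in> X. g ps = v}. h (g ps)) = h v * real (walk_count m A a i v)"
      by simp
  qed
  finally show ?thesis unfolding h_def .
qed

theorem theorem4:
  fixes m r r' :: nat and k :: "nat list"
    and A :: "nat \<Rightarrow> nat \<Rightarrow> real" and a :: "nat \<Rightarrow> nat list"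
    and W Wv Wg :: "nat \<Rightarrow> nat \<Rightarrow> real" and \<alpha> :: real
    and S :: "(nat \<Rightarrow> real) \<Rightarrow> (nat \<Rightarrow> real) \<Rightarrow> real"
  assumes k_pos: "\<forall>j<length k. 0 < k ! j"
    and A_01: "\<forall>i<m. \<forall>j<m. A i j = 0 \<or> A i j = 1"
    and A_sym: "\<forall>i<m. \<forall>j<m. A i j = A j i"
    and attr: "\<forall>i<m. a i \<in> attrs k"
    and alpha: "0 \<le> \<alpha>" "\<alpha> \<le> 1"
  shows "(\<forall>n\<ge>1. \<forall>i<m. \<forall>p<r'.
            (\<Sum>q<r'. Wg p q * Fmat m \<alpha> r k W Wv a A S n q i) =
            (\<Sum>q<r'. Wg p q * (\<Sum>v\<in>walk_types k n.
                 WvW_pow \<alpha> r k W Wv v q * walk_weight S (Wemb r k W) v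
                   * real (walk_count m A a i v))))
       \<and> (\<forall>T\<ge>1. \<forall>n p. (n, p) \<in> rowIdx r' T \<longrightarrow>
            (\<Sum>i<m. leaky \<alpha> (\<Sum>q<r'. Wg p q * Fmat m \<alpha> r k W Wv a A S n q i)) =
            (\<Sum>i<m. leaky \<alpha>
               (mv (colIdx k T) (Mblk \<alpha> r r' k W Wv Wg)
                  (mv (colIdx k T) (Lblk (\<lambda>x. walk_weight S (Wemb r k W) (snd x)))
                     (\<lambda>x. real (walk_count m A a i (snd x)))) (n, p))))"
proof -
  have P1: "(\<Sum>q<r'. Wg p q * Fmat m \<alpha> r k W Wv a A S n q i) =
            (\<Sum>q<r'. Wg p q * (\<Sum>v\<in>walk_types k n.
                 WvW_pow \<alpha> r k W Wv v q * walk_weight S (Wemb r k W) v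
                   * real (walk_count m A a i v)))" if n: "n \<ge> 1" and im: "i < m" for n i p
  proof -
    obtain n0 where n0: "n = Suc n0" using n by (cases n) auto
    have "Fmat m \<alpha> r k W Wv a A S n q i = (\<Sum>v\<in>walk_types k n.
                 WvW_pow \<alpha> r k W Wv v q * walk_weight S (Wemb r k W) v
                   * real (walk_count m A a i v))" for q
      unfolding Fmat_def n0 featmat_walks[OF im]
      by (rule walk_form[OF A_01 A_sym attr alpha(2) im])
    then show ?thesis by simp
  qed
  have P2: "(\<Sum>i<m. leaky \<alpha> (\<Sum>q<r'. Wg p q * Fmat m \<alpha> r k W Wv a A S n q i)) =
            (\<Sum>i<m. leaky \<alpha>
               (mv (colIdx k T) (Mblk \<alpha> r r' k W Wv Wg)
                  (mv (colIdx k T) (Lblk (\<lambda>x. walk_weight S (Wemb r k W) (snd x)))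
                     (\<lambda>x. real (walk_count m A a i (snd x)))) (n, p)))"
    if T: "T \<ge> 1" and np: "(n, p) \<in> rowIdx r' T" for T n p
  proof (rule sum.cong[OF refl])
    fix i assume "i \<in> {..<m}"
    then have im: "i < m" by simp
    have n: "1 \<le> n" "n \<le> T" using np by (auto simp: rowIdx_def)
    define C where "C = colIdx k T"
    define lam where "lam = (\<lambda>x::nat \<times> nat list list. walk_weight S (Wemb r k W) (snd x))"
    define c where "c = (\<lambda>x::nat \<times> nat list list. real (walk_count m A a i (snd x)))"
    define WP where "WP v = (\<Sum>q<r'. Wg p q * WvW_pow \<alpha> r k W Wv v q)" for v
    have C: "C = Sigma {1..T} (walk_types k)" unfolding C_def colIdx_def by auto
    have finC: "finite C" unfolding C using walk_types_fin by auto
    have inner: "mv C (Lblk lam) c x = lam x * c x" if x: "x \<in> C" for x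
    proof -
      have "mv C (Lblk lam) c x = (\<Sum>y\<in>C. if x = y then lam x * c y else 0)"
        unfolding mv_def Lblk_def by (rule sum.cong) auto
      also have "\<dots> = lam x * c x" using finC x by (simp add: sum.delta)
      finally show ?thesis .
    qed
    have "mv C (Mblk \<alpha> r r' k W Wv Wg) (mv C (Lblk lam) c) (n, p)
        = (\<Sum>x\<in>C. if fst x = n then WP (snd x) * (lam x * c x) else 0)"
      unfolding mv_def Mblk_def WP_def by (rule sum.cong) (auto simp: inner[unfolded mv_def])
    also have "\<dots> = (\<Sum>x\<in>{x\<in>C. fst x = n}. WP (snd x) * (lam x * c x))"
      by (simp add: sum.inter_filter[OF finC])
    also have "{x\<in>C. fst x = n} = Pair n ` walk_types k n" unfolding C using n by auto
    also have "(\<Sum>x\<in>Pair n ` walk_types k n. WP (snd x) * (lam x * c x))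
        = (\<Sum>v\<in>walk_types k n. WP v * (walk_weight S (Wemb r k W) v * real (walk_count m A a i v)))"
      by (subst sum.reindex) (auto simp: inj_on_def lam_def c_def)
    also have "\<dots> = (\<Sum>q<r'. Wg p q * (\<Sum>v\<in>walk_types k n.
                 WvW_pow \<alpha> r k W Wv v q * walk_weight S (Wemb r k W) v
                   * real (walk_count m A a i v)))"
      unfolding WP_def sum_distrib_right sum_distrib_left
      by (subst sum.swap) (simp add: mult_ac)
    finally show "leaky \<alpha> (\<Sum>q<r'. Wg p q * Fmat m \<alpha> r k W Wv a A S n q i) =
        leaky \<alpha> (mv (colIdx k T) (Mblk \<alpha> r r' k W Wv Wg)
                  (mv (colIdx k T) (Lblk (\<lambda>x. walk_weight S (Wemb r k W) (snd x)))
                     (\<lambda>x. real (walk_count m A a i (snd x)))) (n, p))"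
      using P1[OF n(1) im, of p] unfolding C_def lam_def c_def by simp
  qed
  show ?thesis using P1 P2 by blast
qed

end
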